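(* Let $\alpha>1$, let $u_0\in L^\infty(0,\infty)$ be nonnegative with compact support, $m_0(\rho)=\int_0^\rho u_0$, $M=\|u_0\|_{L^1}>0$, let $m$ be the viscosity solution of the mass problem with datum $m_0$, and $S(t)=\inf\{\rho: m(t,\rho)=M\}$. Then for all $t>0$ $$0\le\frac{S(t)}{M(\alpha t)^{1/\alpha}}-1\le\frac{S(0)}{M}(\alpha t)^{-1/\alpha},$$ and for every $\varepsilon>0$ $$\sup_{y\ge\varepsilon}\left|\frac{m\big(t,M(\alpha t)^{1/\alpha}y\big)}{M\,G(y)}-1\right|\to0\quad\text{as }t\to+\infty,\qquad G(y)=\begin{cases}y,&y\le1,\\1,&y>1.\end{cases}$$
   Context: The mass problem is $m_t+(m_\rho)_+^\alpha m=0$ ($t,\rho>0$), $m(t,0)=0$, $m(0,\cdot)=m_0$, understood in the viscosity sense (Crandall–Lions, with Fréchet super/subdifferentials), for which there is a unique bounded uniformly continuous viscosity solution for bounded uniformly continuous non-decreasing $m_0$ with $m_0(0)=0$. Here $\rho\ge0$ is the volume variable for radial densities and $u=m_\rho$. *)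

theory Defs
  imports "HOL-Analysis.Analysis"
begin

definition quadrant :: "(real \<times> real) set" where
  "quadrant = {0<..} \<times> {0<..}"

definition frechet_superdiff ::
  "(real \<times> real \<Rightarrow> real) \<Rightarrow> real \<times> real \<Rightarrow> (real \<times> real) set" where
  "frechet_superdiff w z = {(a, b). \<forall>e>0. \<exists>d>0. \<forall>s r. (s, r) \<in> quadrant \<and> dist (s, r) z < d \<longrightarrow>
      w (s, r) - w z - a * (s - fst z) - b * (r - snd z) \<le> e * dist (s, r) z}"

definition frechet_subdiff ::
  "(real \<times> real \<Rightarrow> real) \<Rightarrow> real \<times> real \<Rightarrow> (real \<times> real) set" where
  "frechet_subdiff w z = {(a, b). \<forall>e>0. \<exists>d>0. \<forall>s r. (s, r) \<in> quadrant \<and> dist (s, r) z < d \<longrightarrow>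
      w (s, r) - w z - a * (s - fst z) - b * (r - snd z) \<ge> - e * dist (s, r) z}"

text \<open>Viscosity (Crandall--Lions) solution of m_t + (m_rho)_+^alpha m = 0 in (0,\<infinity>)^2,
  for a function continuous on [0,\<infinity>)^2.\<close>
definition mass_visc_sol :: "real \<Rightarrow> (real \<Rightarrow> real \<Rightarrow> real) \<Rightarrow> bool" where
  "mass_visc_sol \<alpha> m \<longleftrightarrow>
     continuous_on ({0..} \<times> {0..}) (\<lambda>(t, \<rho>). m t \<rho>) \<and>
     (\<forall>z\<in>quadrant. \<forall>(a, b)\<in>frechet_superdiff (\<lambda>(t, \<rho>). m t \<rho>) z.
        a + (max b 0) powr \<alpha> * m (fst z) (snd z) \<le> 0) \<and>
     (\<forall>z\<in>quadrant. \<forall>(a, b)\<in>frechet_subdiff (\<lambda>(t, \<rho>). m t \<rho>) z.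
        a + (max b 0) powr \<alpha> * m (fst z) (snd z) \<ge> 0)"

definition mass_problem_solution ::
  "real \<Rightarrow> (real \<Rightarrow> real) \<Rightarrow> (real \<Rightarrow> real \<Rightarrow> real) \<Rightarrow> bool" where
  "mass_problem_solution \<alpha> m0 m \<longleftrightarrow>
     mass_visc_sol \<alpha> m \<and>
     uniformly_continuous_on ({0..} \<times> {0..}) (\<lambda>(t, \<rho>). m t \<rho>) \<and>
     bounded ((\<lambda>(t, \<rho>). m t \<rho>) ` ({0..} \<times> {0..})) \<and>
     (\<forall>t\<ge>0. m t 0 = 0) \<and>
     (\<forall>\<rho>\<ge>0. m 0 \<rho> = m0 \<rho>)"

definition G_profile :: "real \<Rightarrow> real" where
  "G_profile y = (if y \<le> 1 then y else 1)"

end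

theory Submission
  imports Defs
begin


lemma hd_fst:
  assumes "(f has_real_derivative f') (at (fst z))"
  shows "((\<lambda>x::real\<times>real. f (fst x)) has_derivative (\<lambda>h. f' * fst h)) (at z)"
proof -
  have "((\<lambda>x::real\<times>real. fst x) has_derivative (\<lambda>h. fst h)) (at z)"
    by (rule has_derivative_fst[OF has_derivative_ident])
  from has_derivative_compose[OF this assms[THEN has_field_derivative_imp_has_derivative]]
  show ?thesis by (simp add: mult.commute)
qed

lemma hd_snd:
  assumes "(f has_real_derivative f') (at (snd z))"
  shows "((\<lambda>x::real\<times>real. f (snd x)) has_derivative (\<lambda>h. f' * snd h)) (at z)"
proof -
  have "((\<lambda>x::real\<times>real. snd x) has_derivative (\<lambda>h. snd h)) (at z)"
    by (rule has_derivative_snd[OF has_derivative_ident])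
  from has_derivative_compose[OF this assms[THEN has_field_derivative_imp_has_derivative]]
  show ?thesis by (simp add: mult.commute)
qed

lemma pos2_deriv: "((\<lambda>x::real. (max x 0)^2) has_real_derivative 2 * max x 0) (at x)"
proof (cases "x = 0")
  case True
  have "((\<lambda>y::real. ((max y 0)^2 - (max 0 0)^2) / (y - 0)) \<longlongrightarrow> 0) (at 0)"
  proof (rule tendsto_sandwich[where f="\<lambda>y::real. - \<bar>y\<bar>" and h="\<lambda>y::real. \<bar>y\<bar>"])
    show "\<forall>\<^sub>F y::real in at 0. - \<bar>y\<bar> \<le> ((max y 0)^2 - (max 0 0)^2) / (y - 0)"
      by (intro always_eventually allI) (auto simp: max_def power2_eq_square)
    show "\<forall>\<^sub>F y::real in at 0. ((max y 0)^2 - (max 0 0)^2) / (y - 0) \<le> \<bar>y\<bar>"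
      by (intro always_eventually allI) (auto simp: max_def power2_eq_square)
    show "((\<lambda>y::real. - \<bar>y\<bar>) \<longlongrightarrow> 0) (at 0)"
      by (auto intro!: tendsto_eq_intros)
    show "((\<lambda>y::real. \<bar>y\<bar>) \<longlongrightarrow> 0) (at 0)"
      by (auto intro!: tendsto_eq_intros)
  qed
  then show ?thesis using True by (simp add: has_field_derivative_iff)
next
  case False
  show ?thesis
  proof (cases "x > 0")
    case True
    have d: "((\<lambda>x::real. x^2) has_real_derivative 2 * x) (at x)"
      by (auto intro!: derivative_eq_intros)
    show ?thesis
      apply (rule has_field_derivative_transform_within_open[where S="{0<..}" and f="\<lambda>x. x^2"])
      using d True by auto
  next
    case False2: False
    have x: "x < 0" using False False2 by auto
    have d: "((\<lambda>x::real. 0) has_real_derivative 0) (at x)"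
      by (auto intro!: derivative_eq_intros)
    show ?thesis
      apply (rule has_field_derivative_transform_within_open[where S="{..<0}" and f="\<lambda>x. 0"])
      using d x by auto
  qed
qed




definition Lf :: "real \<Rightarrow> real \<Rightarrow> real \<Rightarrow> real" where
  "Lf \<alpha> \<tau> t = (\<alpha> * (t + \<tau>)) powr (-1/\<alpha>)"

lemma Lf_pos: "\<alpha> > 0 \<Longrightarrow> t + \<tau> > 0 \<Longrightarrow> Lf \<alpha> \<tau> t > 0"
  unfolding Lf_def by simp

lemma Lf_powr: assumes "\<alpha> > 0" "t + \<tau> > 0"
  shows "Lf \<alpha> \<tau> t powr \<alpha> = 1 / (\<alpha> * (t + \<tau>))"
proof -
  have "Lf \<alpha> \<tau> t powr \<alpha> = (\<alpha> * (t + \<tau>)) powr (-1/\<alpha> * \<alpha>)"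
    unfolding Lf_def using assms by (simp add: powr_powr)
  also have "\<dots> = (\<alpha> * (t + \<tau>)) powr (-1)" using assms by simp
  also have "\<dots> = 1 / (\<alpha> * (t + \<tau>))" using assms by (simp add: powr_minus divide_inverse)
  finally show ?thesis .
qed

lemma Lf_deriv: assumes "\<alpha> > 0" "t + \<tau> > 0"
  shows "(Lf \<alpha> \<tau> has_real_derivative - Lf \<alpha> \<tau> t / (\<alpha> * (t + \<tau>))) (at t)"
proof -
  have pos: "\<alpha> * (t + \<tau>) > 0" using assms by simp
  have "((\<lambda>t. (\<alpha> * (t + \<tau>)) powr (-1/\<alpha>)) has_real_derivative
        (-1/\<alpha>) * (\<alpha> * (t + \<tau>)) powr (-1/\<alpha> - 1) * \<alpha>) (at t)"
    using pos by (auto intro!: derivative_eq_intros)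
  moreover have "(-1/\<alpha>) * (\<alpha> * (t + \<tau>)) powr (-1/\<alpha> - 1) * \<alpha> = - Lf \<alpha> \<tau> t / (\<alpha> * (t + \<tau>))"
    using pos assms unfolding Lf_def by (simp add: powr_diff)
  ultimately show ?thesis unfolding Lf_def by simp
qed

definition gd :: "real \<Rightarrow> real \<Rightarrow> real" where
  "gd \<delta> y = y - (max (y - (1-\<delta>)) 0)^2/(4*\<delta>) + (max (y - (1+\<delta>)) 0)^2/(4*\<delta>)"
definition gd' :: "real \<Rightarrow> real \<Rightarrow> real" where
  "gd' \<delta> y = 1 - max (y - (1-\<delta>)) 0/(2*\<delta>) + max (y - (1+\<delta>)) 0/(2*\<delta>)"

lemma gd_deriv: "(gd \<delta> has_real_derivative gd' \<delta> y) (at y)"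
proof -
  have a: "((\<lambda>y. (max (y - (1-\<delta>)) 0)^2) has_real_derivative 2 * max (y - (1-\<delta>)) 0 * 1) (at y)"
    by (rule DERIV_chain2[OF pos2_deriv]) (auto intro!: derivative_eq_intros)
  have b: "((\<lambda>y. (max (y - (1+\<delta>)) 0)^2) has_real_derivative 2 * max (y - (1+\<delta>)) 0 * 1) (at y)"
    by (rule DERIV_chain2[OF pos2_deriv]) (auto intro!: derivative_eq_intros)
  have "((\<lambda>y. y - (max (y - (1-\<delta>)) 0)^2/(4*\<delta>) + (max (y - (1+\<delta>)) 0)^2/(4*\<delta>)) has_real_derivative
      1 - 2 * max (y - (1-\<delta>)) 0 * 1/(4*\<delta>) + 2 * max (y - (1+\<delta>)) 0 * 1/(4*\<delta>)) (at y)"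
    by (intro derivative_intros DERIV_cdivide a b DERIV_ident)
  then show ?thesis unfolding gd_def[abs_def] gd'_def by (simp add: field_simps)
qed

context fixes \<delta> :: real assumes d: "0 < \<delta>" "\<delta> < 1" begin

lemma gd'_nonneg: "0 \<le> gd' \<delta> y"
  using d unfolding gd'_def by (auto simp: max_def field_simps)
lemma gd'_le1: "gd' \<delta> y \<le> 1"
  using d unfolding gd'_def by (auto simp: max_def field_simps)
lemma gd_le_id: "gd \<delta> y \<le> y"
proof -
  have "(max (y - (1+\<delta>)) 0)^2 \<le> (max (y - (1-\<delta>)) 0)^2"
    using d by (intro power_mono) auto
  then show ?thesis using d unfolding gd_def by (simp add: divide_right_mono)
qed
lemma gd_low: "y \<le> 1 - \<delta> \<Longrightarrow> gd \<delta> y = y"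
  using d unfolding gd_def by (simp add: max_def)
lemma gd_high: "y \<ge> 1 + \<delta> \<Longrightarrow> gd \<delta> y = 1"
  using d unfolding gd_def by (simp add: max_def field_simps power2_eq_square)
lemma gd_mid: "1 - \<delta> \<le> y \<Longrightarrow> y \<le> 1 + \<delta> \<Longrightarrow> gd \<delta> y = y - (y - (1-\<delta>))^2/(4*\<delta>)"
  using d unfolding gd_def by (simp add: max_def)
lemma gd_le1: "gd \<delta> y \<le> 1"
proof -
  consider "y \<le> 1 - \<delta>" | "1 - \<delta> \<le> y \<and> y \<le> 1 + \<delta>" | "y \<ge> 1 + \<delta>" by linarith
  then show ?thesis
  proof cases
    case 1 then show ?thesis using gd_low d by simp
  next
    case 2
    have "y - (y - (1-\<delta>))^2/(4*\<delta>) \<le> 1"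
    proof -
      have "(y - (1-\<delta>) - 2*\<delta>)^2 \<ge> 0" by simp
      then have "4*\<delta>*y - (y - (1-\<delta>))^2 \<le> 4*\<delta>" by (simp add: power2_eq_square algebra_simps)
      then show ?thesis using d by (simp add: field_simps)
    qed
    then show ?thesis using gd_mid 2 by simp
  next
    case 3 then show ?thesis using gd_high by simp
  qed
qed
lemma gd_ge_min: "gd \<delta> y \<ge> min y (1 - \<delta>)"
proof -
  consider "y \<le> 1 - \<delta>" | "1 - \<delta> \<le> y \<and> y \<le> 1 + \<delta>" | "y \<ge> 1 + \<delta>" by linarith
  then show ?thesis
  proof cases
    case 1 then show ?thesis using gd_low d by simp
  next
    case 2
    have "y - (y - (1-\<delta>))^2/(4*\<delta>) \<ge> 1 - \<delta>"
    proof -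
      have "(y - (1-\<delta>))^2 \<le> 4*\<delta>*(y - (1-\<delta>))"
        using 2 d by (simp add: power2_eq_square mult_right_mono)
      then show ?thesis using d by (simp add: field_simps)
    qed
    then show ?thesis using gd_mid 2 by simp
  next
    case 3 then show ?thesis using gd_high d by simp
  qed
qed
lemma gd_nonneg: "y \<ge> 0 \<Longrightarrow> gd \<delta> y \<ge> 0"
  using gd_ge_min[of y] d by simp
lemma gd_neg: "y < 0 \<Longrightarrow> gd \<delta> y < 0"
  using gd_low[of y] d by simp

end



lemma upper_P1_deriv:
  assumes "\<alpha> > 0" "fst z + \<tau> > 0"
  shows "((\<lambda>x. snd x * Lf \<alpha> \<tau> (fst x) + \<epsilon> * (1 + fst x) + \<epsilon>' * snd x) has_derivative
     (\<lambda>h. (snd z * (- Lf \<alpha> \<tau> (fst z) / (\<alpha> * (fst z + \<tau>))) + \<epsilon>) * fst h + (Lf \<alpha> \<tau> (fst z) + \<epsilon>') * snd h)) (at z)"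
proof -
  note d1 = hd_fst[OF Lf_deriv[OF assms]]
  note s = has_derivative_snd[OF has_derivative_ident]
  note f = has_derivative_fst[OF has_derivative_ident]
  show ?thesis
    apply (rule has_derivative_eq_rhs)
     apply (rule has_derivative_add has_derivative_mult d1 s f has_derivative_const)+
    apply (simp add: fun_eq_iff algebra_simps)
    done
qed

lemma upper_P2_deriv:
  shows "((\<lambda>x::real\<times>real. M + \<epsilon> * (1 + fst x) + \<epsilon>' * snd x) has_derivative
     (\<lambda>h. \<epsilon> * fst h + \<epsilon>' * snd h)) (at z)"
proof -
  note s = has_derivative_snd[OF has_derivative_ident]
  note f = has_derivative_fst[OF has_derivative_ident]
  show ?thesis
    apply (rule has_derivative_eq_rhs)
     apply (rule has_derivative_add has_derivative_mult s f has_derivative_const)+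
    apply (simp add: fun_eq_iff algebra_simps)
    done
qed

lemma lower_P0_deriv:
  shows "((\<lambda>x::real\<times>real. - (\<epsilon> * (1 + fst x)) - \<epsilon>' * snd x) has_derivative
     (\<lambda>h. (-\<epsilon>) * fst h + (-\<epsilon>') * snd h)) (at z)"
proof -
  note s = has_derivative_snd[OF has_derivative_ident]
  note f = has_derivative_fst[OF has_derivative_ident]
  show ?thesis
    apply (rule has_derivative_eq_rhs)
     apply (rule has_derivative_add has_derivative_diff has_derivative_minus has_derivative_mult s f has_derivative_const)+
    apply (simp add: fun_eq_iff algebra_simps)
    done
qed

lemma aux_lin: "(M::real) \<noteq> 0 \<Longrightarrow> M * (g * ((A * h1 + B * h2) / M)) - e * h1 - e' * h2 = (g * A - e) * h1 + (g * B - e') * h2"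
  by (simp add: field_simps)

lemma lower_P1_deriv:
  fixes S0 M \<alpha> \<tau> \<delta> \<epsilon> \<epsilon>' :: real and z :: "real \<times> real"
  assumes "\<alpha> > 0" "fst z + \<tau> > 0" "M \<noteq> 0"
  defines "Y \<equiv> (snd z - S0) * Lf \<alpha> \<tau> (fst z) / M"
  shows "((\<lambda>x. M * gd \<delta> ((snd x - S0) * Lf \<alpha> \<tau> (fst x) / M) - \<epsilon> * (1 + fst x) - \<epsilon>' * snd x) has_derivative
     (\<lambda>h. (gd' \<delta> Y * (snd z - S0) * (- Lf \<alpha> \<tau> (fst z) / (\<alpha> * (fst z + \<tau>))) - \<epsilon>) * fst h
        + (gd' \<delta> Y * Lf \<alpha> \<tau> (fst z) - \<epsilon>') * snd h)) (at z)"
proof -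
  note d1 = hd_fst[OF Lf_deriv[OF assms(1,2)]]
  have ne: "\<alpha> * \<tau> + \<alpha> * fst z \<noteq> 0" "\<alpha> * (fst z + \<tau>) \<noteq> 0"
    using assms(1,2) by (simp_all add: distrib_left[symmetric] add.commute)
  note s = has_derivative_snd[OF has_derivative_ident]
  note f = has_derivative_fst[OF has_derivative_ident]
  have dY: "((\<lambda>x. (snd x - S0) * Lf \<alpha> \<tau> (fst x) / M) has_derivative
      (\<lambda>h. ((snd z - S0) * (- Lf \<alpha> \<tau> (fst z) / (\<alpha> * (fst z + \<tau>))) * fst h + Lf \<alpha> \<tau> (fst z) * snd h) / M)) (at z)"
    apply (rule has_derivative_eq_rhs)
     apply (rule has_derivative_divide' has_derivative_add has_derivative_diff has_derivative_mult d1 s f has_derivative_const)+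
    using assms by (simp_all add: fun_eq_iff field_simps)
  have dg: "((\<lambda>x. gd \<delta> ((snd x - S0) * Lf \<alpha> \<tau> (fst x) / M)) has_derivative
      (\<lambda>h. gd' \<delta> Y * (((snd z - S0) * (- Lf \<alpha> \<tau> (fst z) / (\<alpha> * (fst z + \<tau>))) * fst h + Lf \<alpha> \<tau> (fst z) * snd h) / M))) (at z)"
    using has_derivative_compose[OF dY gd_deriv[THEN has_field_derivative_imp_has_derivative]]
    unfolding Y_def by simp
  show ?thesis
    apply (rule has_derivative_eq_rhs)
     apply (rule has_derivative_add has_derivative_diff has_derivative_mult dg s f has_derivative_const)+
    using assms(3) ne by (simp_all add: fun_eq_iff aux_lin mult.assoc) (simp add: field_simps)
qed



lemma test_super:
  fixes m :: "real \<Rightarrow> real \<Rightarrow> real" and P :: "real \<times> real \<Rightarrow> real"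
  assumes z: "z \<in> quadrant"
    and dP: "(P has_derivative (\<lambda>h. a * fst h + b * snd h)) (at z)"
    and mx: "\<And>x. x \<in> quadrant \<Longrightarrow> m (fst x) (snd x) - P x \<le> m (fst z) (snd z) - P z"
  shows "(a, b) \<in> frechet_superdiff (\<lambda>(t, \<rho>). m t \<rho>) z"
  unfolding frechet_superdiff_def
proof (clarsimp)
  fix e :: real assume e: "0 < e"
  from dP[unfolded has_derivative_at_alt] e obtain d where d: "d > 0"
    and hd: "\<And>y. norm (y - z) < d \<Longrightarrow> norm (P y - P z - (a * fst (y - z) + b * snd (y - z))) \<le> e * norm (y - z)"
    by blast
  show "\<exists>d>0. \<forall>s r. (s, r) \<in> quadrant \<and> dist (s, r) z < d \<longrightarrow>
            m s r - (case z of (t, \<rho>) \<Rightarrow> m t \<rho>) - a * (s - fst z) - b * (r - snd z) \<le> e * dist (s, r) z"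
  proof (intro exI[of _ d] conjI allI impI)
    fix s r assume h: "(s, r) \<in> quadrant \<and> dist (s, r) z < d"
    have 1: "norm (P (s,r) - P z - (a * (s - fst z) + b * (r - snd z))) \<le> e * dist (s,r) z"
      using hd[of "(s,r)"] h by (simp add: dist_norm)
    have 2: "m s r - P (s,r) \<le> m (fst z) (snd z) - P z" using mx[of "(s,r)"] h by simp
    show "m s r - (case z of (t, \<rho>) \<Rightarrow> m t \<rho>) - a * (s - fst z) - b * (r - snd z) \<le> e * dist (s, r) z"
      using 1 2 by (cases z) (auto simp: abs_le_iff)
  qed (rule d)
qed



lemma exists_min_quadrant:
  fixes F :: "real \<times> real \<Rightarrow> real"
  assumes cont: "continuous_on ({0..}\<times>{0..}) F"
    and c: "c > 0"
    and coer: "\<And>x. x \<in> {0..}\<times>{0..} \<Longrightarrow> F x \<ge> c * (fst x + snd x) - K"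
    and x0: "x0 \<in> {0..}\<times>{0..}"
  shows "\<exists>z\<in>{0..}\<times>{0..}. F z \<le> F x0 \<and> (\<forall>x\<in>{0..}\<times>{0..}. F z \<le> F x)"
proof -
  define R where "R = (\<bar>K\<bar> + \<bar>F x0\<bar> + 1)/c + fst x0 + snd x0"
  have x0R: "fst x0 \<le> R" "snd x0 \<le> R"
  proof -
    have "(\<bar>K\<bar> + \<bar>F x0\<bar> + 1)/c \<ge> 0" using c by simp
    then show "fst x0 \<le> R" "snd x0 \<le> R" using x0 by (auto simp: R_def mem_Times_iff)
  qed
  have cR: "c * R \<ge> K + \<bar>F x0\<bar> + 1"
  proof -
    have "c * R = (\<bar>K\<bar> + \<bar>F x0\<bar> + 1) + c * (fst x0 + snd x0)" using c by (simp add: R_def field_simps)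
    moreover have "c * (fst x0 + snd x0) \<ge> 0" using x0 c by (auto simp: mem_Times_iff)
    ultimately show ?thesis by linarith
  qed
  let ?B = "{0..R}\<times>{0..R}"
  have B: "compact ?B" by (intro compact_Times compact_Icc)
  have x0B: "x0 \<in> ?B" using x0 x0R by (auto simp: mem_Times_iff)
  have sub: "?B \<subseteq> {0..}\<times>{0..}" by auto
  from continuous_attains_inf[OF B _ continuous_on_subset[OF cont sub]] x0B
  obtain z where zB: "z \<in> ?B" and zmin: "\<And>y. y \<in> ?B \<Longrightarrow> F z \<le> F y" by blast
  have "F z \<le> F x0" using zmin x0B by blast
  moreover have "\<forall>x\<in>{0::real..}\<times>{0::real..}. F z \<le> F x"
  proof
    fix x :: "real \<times> real" assume x: "x \<in> {0..}\<times>{0..}"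
    show "F z \<le> F x"
    proof (cases "x \<in> ?B")
      case True then show ?thesis using zmin by blast
    next
      case False
      then have "fst x + snd x \<ge> R" using x by (auto simp: mem_Times_iff)
      then have "c * (fst x + snd x) \<ge> c * R" using c by simp
      then have "F x \<ge> \<bar>F x0\<bar> + 1" using coer[OF x] cR by linarith
      then show ?thesis using \<open>F z \<le> F x0\<close> by linarith
    qed
  qed
  ultimately show ?thesis using zB sub by blast
qed



lemma test_sub:
  fixes m :: "real \<Rightarrow> real \<Rightarrow> real" and P :: "real \<times> real \<Rightarrow> real"
  assumes z: "z \<in> quadrant"
    and dP: "(P has_derivative (\<lambda>h. a * fst h + b * snd h)) (at z)"
    and mn: "\<And>x. x \<in> quadrant \<Longrightarrow> m (fst x) (snd x) - P x \<ge> m (fst z) (snd z) - P z"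
  shows "(a, b) \<in> frechet_subdiff (\<lambda>(t, \<rho>). m t \<rho>) z"
  unfolding frechet_subdiff_def
proof (clarsimp)
  fix e :: real assume e: "0 < e"
  from dP[unfolded has_derivative_at_alt] e obtain d where d: "d > 0"
    and hd: "\<And>y. norm (y - z) < d \<Longrightarrow> norm (P y - P z - (a * fst (y - z) + b * snd (y - z))) \<le> e * norm (y - z)"
    by blast
  show "\<exists>d>0. \<forall>s r. (s, r) \<in> quadrant \<and> dist (s, r) z < d \<longrightarrow>
            - (e * dist (s, r) z) \<le> m s r - (case z of (t, \<rho>) \<Rightarrow> m t \<rho>) - a * (s - fst z) - b * (r - snd z)"
  proof (intro exI[of _ d] conjI allI impI)
    fix s r assume h: "(s, r) \<in> quadrant \<and> dist (s, r) z < d"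
    have 1: "norm (P (s,r) - P z - (a * (s - fst z) + b * (r - snd z))) \<le> e * dist (s,r) z"
      using hd[of "(s,r)"] h by (simp add: dist_norm)
    have 2: "m s r - P (s,r) \<ge> m (fst z) (snd z) - P z" using mn[of "(s,r)"] h by simp
    show "- (e * dist (s, r) z) \<le> m s r - (case z of (t, \<rho>) \<Rightarrow> m t \<rho>) - a * (s - fst z) - b * (r - snd z)"
      using 1 2 by (cases z) (auto simp: abs_le_iff)
  qed (rule d)
qed

lemma cont_m:
  assumes "mass_visc_sol \<alpha> m"
  shows "continuous_on ({0..}\<times>{0..}) (\<lambda>x. m (fst x) (snd x))"
proof -
  have "(\<lambda>(t, \<rho>). m t \<rho>) = (\<lambda>x. m (fst x) (snd x))" by (simp add: fun_eq_iff split_beta)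
  then show ?thesis using assms unfolding mass_visc_sol_def by metis
qed

lemma cont_Lf:
  assumes "\<alpha> > 0" "\<tau> > 0"
  shows "continuous_on ({0..}\<times>{0..}) (\<lambda>x::real\<times>real. Lf \<alpha> \<tau> (fst x))"
  unfolding Lf_def using assms
  by (auto intro!: continuous_intros simp: mem_Times_iff add_pos_nonneg)




lemma upper_comp:
  fixes m :: "real \<Rightarrow> real \<Rightarrow> real"
  assumes al: "\<alpha> > 1" and vs: "mass_visc_sol \<alpha> m"
    and K: "\<And>x. x \<in> {0..}\<times>{0..} \<Longrightarrow> \<bar>m (fst x) (snd x)\<bar> \<le> K"
    and bc: "\<And>t. t \<ge> 0 \<Longrightarrow> m t 0 = 0"
    and ic: "\<And>\<rho>. \<rho> \<ge> 0 \<Longrightarrow> m 0 \<rho> \<le> min (\<rho> * Lf \<alpha> \<tau> 0) M"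
    and tau: "\<tau> > 0" and M: "M \<ge> 0"
    and t0: "t0 \<ge> 0" and r0: "\<rho>0 \<ge> 0"
  shows "m t0 \<rho>0 \<le> min (\<rho>0 * Lf \<alpha> \<tau> t0) M"
proof (rule ccontr)
  assume neg: "\<not> ?thesis"
  define gap where "gap = m t0 \<rho>0 - min (\<rho>0 * Lf \<alpha> \<tau> t0) M"
  have gap: "gap > 0" using neg unfolding gap_def by linarith
  define \<epsilon> where "\<epsilon> = gap / (4 * (1 + t0))"
  define \<epsilon>' where "\<epsilon>' = gap / (4 * (1 + \<rho>0))"
  have ep: "\<epsilon> > 0" "\<epsilon>' > 0" using gap t0 r0 by (simp_all add: \<epsilon>_def \<epsilon>'_def)
  have ep1: "\<epsilon> * (1 + t0) = gap / 4" "\<epsilon>' * \<rho>0 \<le> gap / 4"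
    using gap t0 r0 by (simp_all add: \<epsilon>_def \<epsilon>'_def field_simps)
  have a0: "\<alpha> > 0" using al by simp
  define \<psi> where "\<psi> = (\<lambda>x::real\<times>real. min (snd x * Lf \<alpha> \<tau> (fst x)) M + \<epsilon> * (1 + fst x) + \<epsilon>' * snd x)"
  define F where "F = (\<lambda>x. \<psi> x - m (fst x) (snd x))"
  have Lpos: "\<And>t. t \<ge> 0 \<Longrightarrow> Lf \<alpha> \<tau> t > 0" using Lf_pos[OF a0] tau by simp
  have contF: "continuous_on ({0..}\<times>{0..}) F"
    unfolding F_def \<psi>_def
    by (intro continuous_intros cont_m[OF vs] cont_Lf[OF a0 tau])
  have coer: "F x \<ge> min \<epsilon> \<epsilon>' * (fst x + snd x) - K" if x: "x \<in> {0..}\<times>{0..}" for x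
  proof -
    have "min (snd x * Lf \<alpha> \<tau> (fst x)) M \<ge> 0" using x Lpos[of "fst x"] M by (auto simp: mem_Times_iff)
    moreover have "min \<epsilon> \<epsilon>' * (fst x + snd x) \<le> \<epsilon> * fst x + \<epsilon>' * snd x"
      using x by (auto simp: mem_Times_iff distrib_left intro!: add_mono mult_right_mono)
    moreover have "m (fst x) (snd x) \<le> K" using K[OF x] by simp
    moreover have "\<epsilon> * (1 + fst x) = \<epsilon> + \<epsilon> * fst x" by (simp add: algebra_simps)
    ultimately show ?thesis using ep unfolding F_def \<psi>_def by linarith
  qed
  have x0: "(t0, \<rho>0) \<in> {0..}\<times>{0..}" using t0 r0 by simp
  have F0: "F (t0, \<rho>0) < 0"
    using ep1 gap unfolding F_def \<psi>_def gap_def by simp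
  obtain z where zQ: "z \<in> {0..}\<times>{0..}" and zle: "F z \<le> F (t0, \<rho>0)"
      and zmin: "\<And>x. x \<in> {0..}\<times>{0..} \<Longrightarrow> F z \<le> F x"
    using exists_min_quadrant[OF contF _ coer x0] ep by auto
  have Fz: "F z < 0" using zle F0 by simp
  obtain tz rz where zz: "z = (tz, rz)" by (cases z)
  have tz0: "tz \<ge> 0" "rz \<ge> 0" using zQ zz by auto
  have tzp: "tz > 0"
  proof (rule ccontr)
    assume "\<not> tz > 0" then have "tz = 0" using tz0 by simp
    moreover have "\<epsilon>' * rz \<ge> 0" using ep tz0 by simp
    moreover have "m 0 rz \<le> min (rz * Lf \<alpha> \<tau> 0) M" using ic[of rz] tz0 by simp
    moreover have "\<epsilon> * (1 + 0) = \<epsilon>" by simp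
    ultimately have "F z \<ge> 0" using ep unfolding F_def \<psi>_def zz \<open>tz = 0\<close> fst_conv snd_conv by linarith
    then show False using Fz by simp
  qed
  have rzp: "rz > 0"
  proof (rule ccontr)
    assume "\<not> rz > 0" then have "rz = 0" using tz0 by simp
    then have "F z \<ge> 0" using bc[of tz] tz0 ep M Lpos[of tz] unfolding F_def \<psi>_def zz by simp
    then show False using Fz by simp
  qed
  have zq: "z \<in> quadrant" using tzp rzp zz by (simp add: quadrant_def)
  have mz: "m tz rz > \<psi> z" using Fz unfolding F_def zz by simp
  have Q: "x \<in> quadrant \<Longrightarrow> x \<in> {0..}\<times>{0..}" for x by (auto simp: quadrant_def)
  have Lz: "Lf \<alpha> \<tau> tz > 0" using Lpos tz0 by simp
  have ez: "\<epsilon> * (1 + tz) \<ge> 0" "\<epsilon>' * rz \<ge> 0" using ep tz0 by simp_all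
  have ftau: "fst z + \<tau> > 0" using zz tz0 tau by simp
  show False
  proof (cases "rz * Lf \<alpha> \<tau> tz \<le> M")
    case True
    define P where "P = (\<lambda>x::real\<times>real. snd x * Lf \<alpha> \<tau> (fst x) + \<epsilon> * (1 + fst x) + \<epsilon>' * snd x)"
    define a where "a = rz * (- Lf \<alpha> \<tau> tz / (\<alpha> * (tz + \<tau>))) + \<epsilon>"
    define b where "b = Lf \<alpha> \<tau> tz + \<epsilon>'"
    have dP: "(P has_derivative (\<lambda>h. a * fst h + b * snd h)) (at z)"
      using upper_P1_deriv[OF a0 ftau, of \<epsilon> \<epsilon>'] unfolding P_def a_def b_def zz by simp
    have Pz: "P z = \<psi> z" using True unfolding P_def \<psi>_def zz by simp
    have "(a, b) \<in> frechet_superdiff (\<lambda>(t, \<rho>). m t \<rho>) z"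
    proof (rule test_super[OF zq dP])
      fix x assume "x \<in> quadrant"
      then have "F z \<le> F x" using zmin Q by blast
      moreover have "\<psi> x \<le> P x" unfolding \<psi>_def P_def by simp
      ultimately show "m (fst x) (snd x) - P x \<le> m (fst z) (snd z) - P z"
        using Pz unfolding F_def by simp
    qed
    then have vis: "a + (max b 0) powr \<alpha> * m tz rz \<le> 0"
      using vs zq unfolding mass_visc_sol_def zz by fastforce
    have mzge: "m tz rz \<ge> rz * Lf \<alpha> \<tau> tz"
      using mz True ez unfolding \<psi>_def zz by simp
    have bge: "max b 0 \<ge> Lf \<alpha> \<tau> tz" using ep Lz unfolding b_def by simp
    have "(max b 0) powr \<alpha> * m tz rz \<ge> Lf \<alpha> \<tau> tz powr \<alpha> * (rz * Lf \<alpha> \<tau> tz)"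
    proof (rule mult_mono)
      show "Lf \<alpha> \<tau> tz powr \<alpha> \<le> max b 0 powr \<alpha>" using bge Lz a0 by (intro powr_mono2) auto
    qed (use mzge Lz tz0 in auto)
    also have "Lf \<alpha> \<tau> tz powr \<alpha> * (rz * Lf \<alpha> \<tau> tz) = rz * Lf \<alpha> \<tau> tz / (\<alpha> * (tz + \<tau>))"
      using Lf_powr[OF a0, of tz \<tau>] tz0 tau by simp
    finally have "a + (max b 0) powr \<alpha> * m tz rz \<ge> \<epsilon>" unfolding a_def by simp
    then show False using vis ep by simp
  next
    case False
    define P where "P = (\<lambda>x::real\<times>real. M + \<epsilon> * (1 + fst x) + \<epsilon>' * snd x)"
    have dP: "(P has_derivative (\<lambda>h. \<epsilon> * fst h + \<epsilon>' * snd h)) (at z)"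
      using upper_P2_deriv unfolding P_def by simp
    have Pz: "P z = \<psi> z" using False unfolding P_def \<psi>_def zz by simp
    have "(\<epsilon>, \<epsilon>') \<in> frechet_superdiff (\<lambda>(t, \<rho>). m t \<rho>) z"
    proof (rule test_super[OF zq dP])
      fix x assume "x \<in> quadrant"
      then have "F z \<le> F x" using zmin Q by blast
      moreover have "\<psi> x \<le> P x" unfolding \<psi>_def P_def by simp
      ultimately show "m (fst x) (snd x) - P x \<le> m (fst z) (snd z) - P z"
        using Pz unfolding F_def by simp
    qed
    then have vis: "\<epsilon> + (max \<epsilon>' 0) powr \<alpha> * m tz rz \<le> 0"
      using vs zq unfolding mass_visc_sol_def zz by fastforce
    have "m tz rz \<ge> 0" using mz M ez False unfolding \<psi>_def zz by simp
    then have "(max \<epsilon>' 0) powr \<alpha> * m tz rz \<ge> 0" by simp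
    then show False using vis ep by simp
  qed
qed




lemma powr_le_self01: "0 \<le> (x::real) \<Longrightarrow> x \<le> 1 \<Longrightarrow> 1 \<le> a \<Longrightarrow> x powr a \<le> x"
proof (cases "x = 0")
  case False
  assume "0 \<le> x" "x \<le> 1" "1 \<le> a"
  then have "x powr a \<le> x powr 1" using False by (intro powr_mono') auto
  then show ?thesis using False \<open>0 \<le> x\<close> by simp
qed simp

lemma lower_comp:
  fixes m :: "real \<Rightarrow> real \<Rightarrow> real"
  assumes al: "\<alpha> > 1" and vs: "mass_visc_sol \<alpha> m"
    and K: "\<And>x. x \<in> {0..}\<times>{0..} \<Longrightarrow> \<bar>m (fst x) (snd x)\<bar> \<le> K"
    and bc: "\<And>t. t \<ge> 0 \<Longrightarrow> m t 0 = 0"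
    and ic0: "\<And>\<rho>. \<rho> \<ge> 0 \<Longrightarrow> m 0 \<rho> \<ge> 0"
    and icM: "\<And>\<rho>. \<rho> > S0 \<Longrightarrow> m 0 \<rho> = M"
    and S0: "S0 \<ge> 0" and tau: "\<tau> > 0" and M: "M > 0" and dl: "0 < \<delta>" "\<delta> < 1"
    and t0: "t0 \<ge> 0" and r0: "\<rho>0 \<ge> 0"
  shows "m t0 \<rho>0 \<ge> max 0 (M * gd \<delta> ((\<rho>0 - S0) * Lf \<alpha> \<tau> t0 / M))"
proof (rule ccontr)
  assume neg: "\<not> ?thesis"
  define Wt where "Wt = (\<lambda>x::real\<times>real. max 0 (M * gd \<delta> ((snd x - S0) * Lf \<alpha> \<tau> (fst x) / M)))"
  define gap where "gap = Wt (t0, \<rho>0) - m t0 \<rho>0"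
  have gap: "gap > 0" using neg unfolding gap_def Wt_def fst_conv snd_conv by linarith
  define \<epsilon> where "\<epsilon> = gap / (4 * (1 + t0))"
  define \<epsilon>' where "\<epsilon>' = gap / (4 * (1 + \<rho>0))"
  have ep: "\<epsilon> > 0" "\<epsilon>' > 0" using gap t0 r0 by (simp_all add: \<epsilon>_def \<epsilon>'_def)
  have ep1: "\<epsilon> * (1 + t0) = gap / 4" "\<epsilon>' * \<rho>0 \<le> gap / 4"
    using gap t0 r0 by (simp_all add: \<epsilon>_def \<epsilon>'_def field_simps)
  have a0: "\<alpha> > 0" using al by simp
  define W where "W = (\<lambda>x. Wt x - \<epsilon> * (1 + fst x) - \<epsilon>' * snd x)"
  define F where "F = (\<lambda>x. m (fst x) (snd x) - W x)"
  have Lpos: "\<And>t. t \<ge> 0 \<Longrightarrow> Lf \<alpha> \<tau> t > 0" using Lf_pos[OF a0] tau by simp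
  have Wt_le: "Wt x \<le> M" for x
    using gd_le1[OF dl, of "(snd x - S0) * Lf \<alpha> \<tau> (fst x) / M"] M unfolding Wt_def by simp
  have Wt_ge: "Wt x \<ge> 0" for x unfolding Wt_def by simp
  have Wt_zero: "Wt x = 0" if "snd x \<le> S0" "fst x \<ge> 0" for x
  proof -
    have "(snd x - S0) * Lf \<alpha> \<tau> (fst x) / M \<le> 0"
      using that Lpos[of "fst x"] M by (simp add: divide_nonpos_pos mult_nonpos_nonneg)
    then have "gd \<delta> ((snd x - S0) * Lf \<alpha> \<tau> (fst x) / M) \<le> 0"
      using gd_le_id[OF dl] by (meson order_trans)
    then have "M * gd \<delta> ((snd x - S0) * Lf \<alpha> \<tau> (fst x) / M) \<le> 0" using M by (simp add: mult_nonneg_nonpos)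
    then show ?thesis unfolding Wt_def by (simp add: max_def)
  qed
  have gdc: "continuous_on UNIV (gd \<delta>)" unfolding gd_def using dl by (intro continuous_intros) auto
  have contF: "continuous_on ({0..}\<times>{0..}) F"
    unfolding F_def W_def Wt_def
    using M by (intro continuous_intros cont_m[OF vs] cont_Lf[OF a0 tau] continuous_on_compose2[OF gdc]) auto
  have coer: "F x \<ge> min \<epsilon> \<epsilon>' * (fst x + snd x) - (K + M)" if x: "x \<in> {0..}\<times>{0..}" for x
  proof -
    have "min \<epsilon> \<epsilon>' * (fst x + snd x) \<le> \<epsilon> * fst x + \<epsilon>' * snd x"
      using x by (auto simp: mem_Times_iff distrib_left intro!: add_mono mult_right_mono)
    moreover have "m (fst x) (snd x) \<ge> - K" using K[OF x] by simp
    moreover have "\<epsilon> * (1 + fst x) = \<epsilon> + \<epsilon> * fst x" by (simp add: algebra_simps)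
    ultimately show ?thesis using ep Wt_le[of x] unfolding F_def W_def by linarith
  qed
  have x0: "(t0, \<rho>0) \<in> {0..}\<times>{0..}" using t0 r0 by simp
  have F0: "F (t0, \<rho>0) < 0"
    using ep1 gap unfolding F_def W_def gap_def by simp
  obtain z where zQ: "z \<in> {0..}\<times>{0..}" and zle: "F z \<le> F (t0, \<rho>0)"
      and zmin: "\<And>x. x \<in> {0..}\<times>{0..} \<Longrightarrow> F z \<le> F x"
    using exists_min_quadrant[OF contF _ coer x0] ep by auto
  have Fz: "F z < 0" using zle F0 by simp
  obtain tz rz where zz: "z = (tz, rz)" by (cases z)
  have tz0: "tz \<ge> 0" "rz \<ge> 0" using zQ zz by auto
  have ez: "\<epsilon> * (1 + tz) > 0" "\<epsilon>' * rz \<ge> 0" using ep tz0 by simp_all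
  have tzp: "tz > 0"
  proof (rule ccontr)
    assume "\<not> tz > 0" then have tz: "tz = 0" using tz0 by simp
    have "Wt z \<le> m 0 rz"
    proof (cases "rz \<le> S0")
      case True then show ?thesis using Wt_zero[of z] ic0[of rz] zz tz tz0 by simp
    next
      case False then show ?thesis using Wt_le[of z] icM[of rz] by simp
    qed
    then have "F z \<ge> 0" using ez unfolding F_def W_def zz tz by simp
    then show False using Fz by simp
  qed
  have rzp: "rz > 0"
  proof (rule ccontr)
    assume "\<not> rz > 0" then have rz: "rz = 0" using tz0 by simp
    have "Wt z = 0" using Wt_zero[of z] zz rz S0 tz0 by simp
    then have "F z \<ge> 0" using bc[of tz] tz0 ez unfolding F_def W_def zz rz by simp
    then show False using Fz by simp
  qed
  have zq: "z \<in> quadrant" using tzp rzp zz by (simp add: quadrant_def)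
  have mz: "m tz rz < W z" using Fz unfolding F_def zz by simp
  have Q: "x \<in> quadrant \<Longrightarrow> x \<in> {0..}\<times>{0..}" for x by (auto simp: quadrant_def)
  have Lz: "Lf \<alpha> \<tau> tz > 0" using Lpos tz0 by simp
  have ftau: "fst z + \<tau> > 0" using zz tz0 tau by simp
  define Y where "Y = (rz - S0) * Lf \<alpha> \<tau> tz / M"
  show False
  proof (cases "M * gd \<delta> Y \<ge> 0")
    case True
    define P where "P = (\<lambda>x. M * gd \<delta> ((snd x - S0) * Lf \<alpha> \<tau> (fst x) / M) - \<epsilon> * (1 + fst x) - \<epsilon>' * snd x)"
    define a where "a = gd' \<delta> Y * (rz - S0) * (- Lf \<alpha> \<tau> tz / (\<alpha> * (tz + \<tau>))) - \<epsilon>"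
    define b where "b = gd' \<delta> Y * Lf \<alpha> \<tau> tz - \<epsilon>'"
    have dP: "(P has_derivative (\<lambda>h. a * fst h + b * snd h)) (at z)"
      using lower_P1_deriv[OF a0 ftau, of M \<delta> S0 \<epsilon> \<epsilon>'] M unfolding P_def a_def b_def zz Y_def by simp
    have Pz: "P z = W z" using True unfolding P_def W_def Wt_def zz Y_def by simp
    have "(a, b) \<in> frechet_subdiff (\<lambda>(t, \<rho>). m t \<rho>) z"
    proof (rule test_sub[OF zq dP])
      fix x assume "x \<in> quadrant"
      then have "F z \<le> F x" using zmin Q by blast
      moreover have "P x \<le> W x" unfolding W_def P_def Wt_def by simp
      ultimately show "m (fst x) (snd x) - P x \<ge> m (fst z) (snd z) - P z"
        using Pz unfolding F_def by simp
    qed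
    then have vis: "a + (max b 0) powr \<alpha> * m tz rz \<ge> 0"
      using vs zq unfolding mass_visc_sol_def zz by fastforce
    have gY: "gd \<delta> Y \<ge> 0" using True M by (simp add: zero_le_mult_iff)
    have Y0: "Y \<ge> 0" using gY gd_neg[OF dl, of Y] by force
    have g'0: "gd' \<delta> Y \<ge> 0" "gd' \<delta> Y \<le> 1" using gd'_nonneg[OF dl] gd'_le1[OF dl] by auto
    define A where "A = gd' \<delta> Y * Lf \<alpha> \<tau> tz"
    have A0: "A \<ge> 0" using g'0 Lz unfolding A_def by simp
    have bA: "max b 0 \<le> A" using ep A0 unfolding b_def A_def by simp
    have mzW: "m tz rz \<le> M * gd \<delta> Y"
      using mz ez True unfolding W_def Wt_def zz Y_def by simp
    have step1: "(max b 0) powr \<alpha> * m tz rz \<le> A powr \<alpha> * (M * gd \<delta> Y)"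
    proof (cases "m tz rz \<le> 0")
      case True
      then have "(max b 0) powr \<alpha> * m tz rz \<le> 0" by (simp add: mult_nonneg_nonpos)
      also have "0 \<le> A powr \<alpha> * (M * gd \<delta> Y)" using M gY by simp
      finally show ?thesis .
    next
      case False
      show ?thesis
      proof (rule mult_mono)
        show "max b 0 powr \<alpha> \<le> A powr \<alpha>" using bA a0 by (intro powr_mono2) auto
      qed (use mzW False in auto)
    qed
    have Apow: "A powr \<alpha> = gd' \<delta> Y powr \<alpha> / (\<alpha> * (tz + \<tau>))"
      unfolding A_def using g'0 Lz Lf_powr[OF a0, of tz \<tau>] tz0 tau
      by (simp add: powr_mult)
    have "A powr \<alpha> * (M * gd \<delta> Y) \<le> gd' \<delta> Y * (M * Y) / (\<alpha> * (tz + \<tau>))"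
    proof -
      have "gd' \<delta> Y powr \<alpha> * (M * gd \<delta> Y) \<le> gd' \<delta> Y * (M * Y)"
      proof (rule mult_mono)
        show "gd' \<delta> Y powr \<alpha> \<le> gd' \<delta> Y" using g'0 al by (intro powr_le_self01) auto
        show "M * gd \<delta> Y \<le> M * Y" using M gd_le_id[OF dl, of Y] by simp
      qed (use g'0 M gY in auto)
      then show ?thesis unfolding Apow using a0 tz0 tau by (simp add: divide_right_mono)
    qed
    also have "gd' \<delta> Y * (M * Y) / (\<alpha> * (tz + \<tau>)) = gd' \<delta> Y * (rz - S0) * (Lf \<alpha> \<tau> tz / (\<alpha> * (tz + \<tau>)))"
      unfolding Y_def using M by simp
    finally have "a + (max b 0) powr \<alpha> * m tz rz \<le> - \<epsilon>"
      using step1 unfolding a_def by simp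
    then show False using vis ep by simp
  next
    case False
    define P where "P = (\<lambda>x::real\<times>real. - (\<epsilon> * (1 + fst x)) - \<epsilon>' * snd x)"
    have dP: "(P has_derivative (\<lambda>h. (-\<epsilon>) * fst h + (-\<epsilon>') * snd h)) (at z)"
      using lower_P0_deriv unfolding P_def by simp
    have Pz: "P z = W z" using False unfolding P_def W_def Wt_def zz Y_def by simp
    have "(-\<epsilon>, -\<epsilon>') \<in> frechet_subdiff (\<lambda>(t, \<rho>). m t \<rho>) z"
    proof (rule test_sub[OF zq dP])
      fix x assume "x \<in> quadrant"
      then have "F z \<le> F x" using zmin Q by blast
      moreover have "P x \<le> W x" unfolding W_def P_def Wt_def by simp
      ultimately show "m (fst x) (snd x) - P x \<ge> m (fst z) (snd z) - P z"
        using Pz unfolding F_def by simp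
    qed
    then have vis: "-\<epsilon> + (max (-\<epsilon>') 0) powr \<alpha> * m tz rz \<ge> 0"
      using vs zq unfolding mass_visc_sol_def zz by fastforce
    then show False using ep by simp
  qed
qed




context
  fixes u0 :: "real \<Rightarrow> real" and C R :: real
  assumes meas: "u0 \<in> borel_measurable lborel"
    and Cb: "AE x in lborel. 0 < x \<longrightarrow> \<bar>u0 x\<bar> \<le> C"
    and nn: "AE x in lborel. 0 < x \<longrightarrow> u0 x \<ge> 0"
    and supp: "AE x in lborel. R < x \<longrightarrow> u0 x = 0"
    and C1: "C \<ge> 1" and R0: "R \<ge> 0"
begin

lemma u0_int: "set_integrable lborel {0<..} u0"
  unfolding set_integrable_def
proof (rule Bochner_Integration.integrable_bound)
  show "integrable lborel (\<lambda>x. C * indicator {0<..R} x :: real)"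
    using R0 by (intro integrable_mult_right integrable_real_indicator) auto
  show "(\<lambda>x. indicator {0<..} x *\<^sub>R u0 x) \<in> borel_measurable lborel"
    using meas by measurable
  show "AE x in lborel. norm (indicator {0<..} x *\<^sub>R u0 x) \<le> norm (C * indicator {0<..R} x :: real)"
    using Cb supp by eventually_elim (use C1 in \<open>auto simp: indicator_def\<close>)
qed

lemma u0_int_sub: "A \<in> sets lborel \<Longrightarrow> A \<subseteq> {0<..} \<Longrightarrow> set_integrable lborel A u0"
  by (rule set_integrable_subset[OF u0_int])

lemma u0_nonneg_int: "A \<in> sets lborel \<Longrightarrow> A \<subseteq> {0<..} \<Longrightarrow> (LINT x:A|lborel. u0 x) \<ge> 0"
  unfolding set_lebesgue_integral_def
  by (rule integral_nonneg_AE) (use nn in \<open>eventually_elim, auto simp: indicator_def\<close>)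

lemma u0_mono_sets:
  assumes "A \<in> sets lborel" "B \<in> sets lborel" "A \<subseteq> B" "B \<subseteq> {0<..}"
  shows "(LINT x:A|lborel. u0 x) \<le> (LINT x:B|lborel. u0 x)"
proof -
  have "B = A \<union> (B - A)" using assms by auto
  then have "(LINT x:B|lborel. u0 x) = (LINT x:A|lborel. u0 x) + (LINT x:B - A|lborel. u0 x)"
    using assms by (metis Diff_disjoint set_integral_Un u0_int_sub sets.Diff Diff_subset order_trans)
  moreover have "(LINT x:B - A|lborel. u0 x) \<ge> 0" using assms by (intro u0_nonneg_int) auto
  ultimately show ?thesis by simp
qed

lemma m0_nonneg: "(LINT x:{0<..\<rho>}|lborel. u0 x) \<ge> 0"
  by (rule u0_nonneg_int) auto

lemma m0_le_M: "(LINT x:{0<..\<rho>}|lborel. u0 x) \<le> (LINT x:{0<..}|lborel. u0 x)"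
  by (rule u0_mono_sets) auto

lemma m0_mono: "\<rho>' \<le> \<rho> \<Longrightarrow> (LINT x:{0<..\<rho>'}|lborel. u0 x) \<le> (LINT x:{0<..\<rho>}|lborel. u0 x)"
  by (rule u0_mono_sets) auto

lemma m0_le_C: "\<rho> \<ge> 0 \<Longrightarrow> (LINT x:{0<..\<rho>}|lborel. u0 x) \<le> C * \<rho>"
proof -
  assume r: "\<rho> \<ge> 0"
  have "(LINT x:{0<..\<rho>}|lborel. u0 x) \<le> (LINT x:{0<..\<rho>}|lborel. C)"
  proof (rule set_integral_mono_AE)
    show "set_integrable lborel {0<..\<rho>} u0" by (rule u0_int_sub) auto
    have ii: "integrable lborel (\<lambda>x. C * indicator {0<..\<rho>} x :: real)"
      using r by (intro integrable_mult_right integrable_real_indicator) auto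
    show "set_integrable lborel {0<..\<rho>} (\<lambda>x. C)"
      unfolding set_integrable_def
      by (rule Bochner_Integration.integrable_bound[OF ii]) (auto simp: indicator_def)
    show "AE x\<in>{0<..\<rho>} in lborel. u0 x \<le> C"
      using Cb by eventually_elim auto
  qed
  also have "\<dots> = C * \<rho>" using r by (simp add: set_integral_const)
  finally show ?thesis .
qed

lemma m0_eq_M: "\<rho> \<ge> R \<Longrightarrow> (LINT x:{0<..\<rho>}|lborel. u0 x) = (LINT x:{0<..}|lborel. u0 x)"
proof -
  assume r: "\<rho> \<ge> R"
  have "{0<..} = {0<..\<rho>} \<union> {\<rho><..}" using r R0 by auto
  then have "(LINT x:{0<..}|lborel. u0 x) = (LINT x:{0<..\<rho>}|lborel. u0 x) + (LINT x:{\<rho><..}|lborel. u0 x)"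
    using r R0 by (metis set_integral_Un u0_int_sub greaterThanAtMost_iff greaterThan_iff
        disjoint_iff_not_equal sets_lborel atLeastAtMost_borel greaterThanAtMost_borel greaterThan_borel
        order.strict_trans1 subsetI not_le)
  moreover have "(LINT x:{\<rho><..}|lborel. u0 x) = 0"
    unfolding set_lebesgue_integral_def
  proof (rule integral_eq_zero_AE)
    show "AE x in lborel. indicator {\<rho><..} x *\<^sub>R u0 x = 0"
      using supp by eventually_elim (use r in \<open>auto simp: indicator_def\<close>)
  qed
  ultimately show ?thesis by simp
qed

end



lemma negpow: "(x::real) powr (- 1 / a) = 1 / x powr (1 / a)"
  by (metis minus_divide_left powr_minus_divide)

lemma Lf_le: "\<alpha> > 0 \<Longrightarrow> t > 0 \<Longrightarrow> \<tau> \<ge> 0 \<Longrightarrow> Lf \<alpha> \<tau> t \<le> 1 / (\<alpha> * t) powr (1/\<alpha>)"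
  unfolding Lf_def negpow[symmetric]
  by (rule powr_mono2') (auto simp: divide_nonneg_pos)

lemma Lf_eq: "Lf \<alpha> \<tau> t = 1 / (\<alpha> * (t + \<tau>)) powr (1/\<alpha>)"
  unfolding Lf_def by (rule negpow)

lemma Lf0_C: assumes "\<alpha> > 0" "C > 0" shows "Lf \<alpha> (C powr (-\<alpha>) / \<alpha>) 0 = C"
proof -
  have "Lf \<alpha> (C powr (-\<alpha>) / \<alpha>) 0 = (C powr (-\<alpha>)) powr (-1/\<alpha>)"
    unfolding Lf_def using assms by simp
  also have "\<dots> = C powr ((-\<alpha>) * (-1/\<alpha>))" by (simp add: powr_powr)
  also have "(-\<alpha>) * (-1/\<alpha>) = 1" using assms by simp
  finally show ?thesis using assms by simp
qed




theorem mainTheorem10: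
  fixes \<alpha> :: real and u0 :: "real \<Rightarrow> real" and m :: "real \<Rightarrow> real \<Rightarrow> real"
    and M :: real and S :: "real \<Rightarrow> real"
  assumes alpha: "\<alpha> > 1"
    and u0_meas: "u0 \<in> borel_measurable lborel"
    and u0_Linf: "\<exists>C. AE x in lborel. 0 < x \<longrightarrow> \<bar>u0 x\<bar> \<le> C"
    and u0_nonneg: "AE x in lborel. 0 < x \<longrightarrow> u0 x \<ge> 0"
    and u0_supp: "\<exists>R. AE x in lborel. R < x \<longrightarrow> u0 x = 0"
    and M_def: "M = (LINT x:{0<..}|lborel. u0 x)"
    and M_pos: "M > 0"
    and sol: "mass_problem_solution \<alpha> (\<lambda>\<rho>. LINT x:{0<..\<rho>}|lborel. u0 x) m"
    and S_def: "\<And>t. S t = Inf {\<rho>. \<rho> \<ge> 0 \<and> m t \<rho> = M}"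
  shows "(\<forall>t>0. 0 \<le> S t / (M * (\<alpha> * t) powr (1 / \<alpha>)) - 1 \<and>
                S t / (M * (\<alpha> * t) powr (1 / \<alpha>)) - 1 \<le> S 0 / M * (\<alpha> * t) powr (- 1 / \<alpha>))
       \<and> (\<forall>\<epsilon>>0. \<forall>\<eta>>0. \<forall>\<^sub>F t in at_top. \<forall>y\<ge>\<epsilon>.
            \<bar>m t (M * (\<alpha> * t) powr (1 / \<alpha>) * y) / (M * G_profile y) - 1\<bar> \<le> \<eta>)"
proof -
  have a0: "\<alpha> > 0" using alpha by simp
  have vs: "mass_visc_sol \<alpha> m" using sol unfolding mass_problem_solution_def by simp
  have bc: "\<And>t. t \<ge> 0 \<Longrightarrow> m t 0 = 0" using sol unfolding mass_problem_solution_def by simp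
  have ic: "\<And>\<rho>. \<rho> \<ge> 0 \<Longrightarrow> m 0 \<rho> = (LINT x:{0<..\<rho>}|lborel. u0 x)"
    using sol unfolding mass_problem_solution_def by simp
  have bd: "bounded ((\<lambda>(t, \<rho>). m t \<rho>) ` ({0..} \<times> {0..}))"
    using sol unfolding mass_problem_solution_def by simp
  then obtain K where K0: "\<forall>v\<in>(\<lambda>(t, \<rho>). m t \<rho>) ` ({0..} \<times> {0..}). norm v \<le> K"
    unfolding bounded_iff by blast
  have K: "\<And>x. x \<in> {0..}\<times>{0..} \<Longrightarrow> \<bar>m (fst x) (snd x)\<bar> \<le> K"
  proof -
    fix x :: "real \<times> real" assume x: "x \<in> {0..}\<times>{0..}"
    then have "(\<lambda>(t, \<rho>). m t \<rho>) x \<in> (\<lambda>(t, \<rho>). m t \<rho>) ` ({0..} \<times> {0..})" by blast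
    then show "\<bar>m (fst x) (snd x)\<bar> \<le> K" using K0 by (cases x) auto
  qed
  obtain C0 where C0: "AE x in lborel. 0 < x \<longrightarrow> \<bar>u0 x\<bar> \<le> C0" using u0_Linf by blast
  define C where "C = max C0 1"
  have Cb: "AE x in lborel. 0 < x \<longrightarrow> \<bar>u0 x\<bar> \<le> C"
    using C0 by eventually_elim (auto simp: C_def)
  have C1: "C \<ge> 1" by (simp add: C_def)
  obtain R0 where R0: "AE x in lborel. R0 < x \<longrightarrow> u0 x = 0" using u0_supp by blast
  define R where "R = max R0 0"
  have supp: "AE x in lborel. R < x \<longrightarrow> u0 x = 0"
    using R0 by eventually_elim (auto simp: R_def)
  have Rnn: "R \<ge> 0" by (simp add: R_def)
  note ms = m0_nonneg[OF u0_meas Cb u0_nonneg supp C1 Rnn]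
    m0_le_M[OF u0_meas Cb u0_nonneg supp C1 Rnn]
    m0_mono[OF u0_meas Cb u0_nonneg supp C1 Rnn]
    m0_le_C[OF u0_meas Cb u0_nonneg supp C1 Rnn]
    m0_eq_M[OF u0_meas Cb u0_nonneg supp C1 Rnn]
  have ic0: "\<And>\<rho>. \<rho> \<ge> 0 \<Longrightarrow> m 0 \<rho> \<ge> 0" using ic ms(1) by simp
  have icle: "\<And>\<rho>. \<rho> \<ge> 0 \<Longrightarrow> m 0 \<rho> \<le> M" using ic ms(2) M_def by simp
  have icC: "\<And>\<rho>. \<rho> \<ge> 0 \<Longrightarrow> m 0 \<rho> \<le> C * \<rho>" using ic ms(4) by simp
  define A0 where "A0 = {\<rho>. \<rho> \<ge> 0 \<and> m 0 \<rho> = M}"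
  have RA0: "R \<in> A0" using ic[of R] ms(5)[of R] Rnn M_def unfolding A0_def by simp
  have A0ne: "A0 \<noteq> {}" using RA0 by blast
  have A0bdd: "bdd_below A0" unfolding A0_def by (rule bdd_belowI[of _ 0]) auto
  define S0 where "S0 = S 0"
  have S0A: "S0 = Inf A0" unfolding S0_def S_def A0_def by simp
  have S0nn: "S0 \<ge> 0" unfolding S0A by (rule cInf_greatest[OF A0ne]) (auto simp: A0_def)
  have icM: "\<And>\<rho>. \<rho> > S0 \<Longrightarrow> m 0 \<rho> = M"
  proof -
    fix \<rho> assume r: "\<rho> > S0"
    obtain \<rho>' where r': "\<rho>' \<in> A0" "\<rho>' < \<rho>" using cInf_lessD[OF A0ne, of \<rho>] r S0A by auto
    have "m 0 \<rho> \<ge> m 0 \<rho>'" using ic[of \<rho>] ic[of \<rho>'] ms(3)[of \<rho>' \<rho>] r' r S0nn unfolding A0_def by auto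
    then show "m 0 \<rho> = M" using r' icle[of \<rho>] r S0nn unfolding A0_def by auto
  qed
  define \<tau>u where "\<tau>u = C powr (-\<alpha>) / \<alpha>"
  have tu: "\<tau>u > 0" using C1 a0 by (simp add: \<tau>u_def)
  have Lu0: "Lf \<alpha> \<tau>u 0 = C" unfolding \<tau>u_def using Lf0_C[OF a0, of C] C1 by simp
  have upper: "\<And>t \<rho>. t \<ge> 0 \<Longrightarrow> \<rho> \<ge> 0 \<Longrightarrow> m t \<rho> \<le> min (\<rho> * Lf \<alpha> \<tau>u t) M"
  proof (rule upper_comp[OF alpha vs K bc _ tu])
    fix \<rho> :: real assume "\<rho> \<ge> 0"
    then show "m 0 \<rho> \<le> min (\<rho> * Lf \<alpha> \<tau>u 0) M" using icC[of \<rho>] icle[of \<rho>] Lu0 by (simp add: mult.commute)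
  qed (use M_pos in auto)
  define T where "T = (\<lambda>t. (\<alpha> * t) powr (1 / \<alpha>))"
  have Tpos: "\<And>t. t > 0 \<Longrightarrow> T t > 0" unfolding T_def using a0 by simp
  have upper2: "\<And>t \<rho>. t > 0 \<Longrightarrow> \<rho> \<ge> 0 \<Longrightarrow> m t \<rho> \<le> min (\<rho> / T t) M"
  proof -
    fix t \<rho> :: real assume t: "t > 0" and r: "\<rho> \<ge> 0"
    have "\<rho> * Lf \<alpha> \<tau>u t \<le> \<rho> * (1 / T t)"
      using Lf_le[OF a0 t, of \<tau>u] tu r unfolding T_def by (intro mult_left_mono) auto
    then show "m t \<rho> \<le> min (\<rho> / T t) M" using upper[of t \<rho>] t r by auto
  qed
  have lower: "\<And>\<tau> \<delta> t \<rho>. \<tau> > 0 \<Longrightarrow> 0 < \<delta> \<Longrightarrow> \<delta> < 1 \<Longrightarrow> t \<ge> 0 \<Longrightarrow> \<rho> \<ge> 0 \<Longrightarrow>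
      m t \<rho> \<ge> max 0 (M * gd \<delta> ((\<rho> - S0) * Lf \<alpha> \<tau> t / M))"
    by (rule lower_comp[OF alpha vs K bc ic0 icM S0nn _ M_pos]) auto
  have part1: "\<forall>t>0. 0 \<le> S t / (M * (\<alpha> * t) powr (1 / \<alpha>)) - 1 \<and>
                S t / (M * (\<alpha> * t) powr (1 / \<alpha>)) - 1 \<le> S 0 / M * (\<alpha> * t) powr (- 1 / \<alpha>)"
  proof (intro allI impI)
    fix t :: real assume t: "t > 0"
    define At where "At = {\<rho>. \<rho> \<ge> 0 \<and> m t \<rho> = M}"
    have TT: "T t > 0" using Tpos t by simp
    have MT: "M * T t > 0" using TT M_pos by simp
    have below: "\<And>\<rho>. \<rho> \<in> At \<Longrightarrow> \<rho> \<ge> M * T t"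
    proof -
      fix \<rho> assume "\<rho> \<in> At"
      then have r: "\<rho> \<ge> 0" "m t \<rho> = M" unfolding At_def by auto
      then have "M \<le> \<rho> / T t" using upper2[OF t r(1)] by simp
      then show "\<rho> \<ge> M * T t" using TT by (simp add: field_simps)
    qed
    have above: "\<And>\<rho>. \<rho> > S0 + M * T t \<Longrightarrow> \<rho> \<in> At"
    proof -
      fix \<rho> assume rho: "\<rho> > S0 + M * T t"
      define r where "r = (\<rho> - S0) / (M * T t)"
      have r1: "r > 1" unfolding r_def using rho MT by (simp add: field_simps)
      define \<tau> where "\<tau> = t * (r - 1)"
      have tau: "\<tau> > 0" unfolding \<tau>_def using t r1 by simp
      have tt: "t + \<tau> = t * r" unfolding \<tau>_def by (simp add: algebra_simps)
      have pw: "(\<alpha> * (t + \<tau>)) powr (1/\<alpha>) = T t * r powr (1/\<alpha>)"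
        unfolding tt T_def using a0 t r1 by (simp add: powr_mult mult.assoc)
      define Y where "Y = (\<rho> - S0) * Lf \<alpha> \<tau> t / M"
      have "Y = r / r powr (1/\<alpha>)"
        unfolding Y_def Lf_eq pw r_def using MT TT M_pos by (simp add: field_simps)
      also have "\<dots> = r powr (1 - 1/\<alpha>)" using r1 by (simp add: powr_diff)
      finally have Yeq: "Y = r powr (1 - 1/\<alpha>)" .
      have Y1: "Y > 1" unfolding Yeq using r1 alpha by (intro gr_one_powr) (auto simp: field_simps)
      define \<delta> where "\<delta> = min (1/2) (Y - 1)"
      have dl: "0 < \<delta>" "\<delta> < 1" "1 + \<delta> \<le> Y" using Y1 unfolding \<delta>_def by auto
      have r0: "\<rho> \<ge> 0" using rho S0nn MT by simp
      have "m t \<rho> \<ge> max 0 (M * gd \<delta> Y)" using lower[OF tau dl(1,2) _ r0] t unfolding Y_def by simp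
      moreover have "gd \<delta> Y = 1" using gd_high[OF dl(1,2) dl(3)] .
      ultimately have "m t \<rho> \<ge> M" by simp
      moreover have "m t \<rho> \<le> M" using upper2[OF t r0] by simp
      ultimately show "\<rho> \<in> At" unfolding At_def using r0 by simp
    qed
    have Atne: "At \<noteq> {}" using above[of "S0 + M * T t + 1"] by auto
    have Atbdd: "bdd_below At" unfolding At_def by (rule bdd_belowI[of _ 0]) auto
    have St: "S t = Inf At" unfolding S_def At_def by simp
    have Sge: "S t \<ge> M * T t" unfolding St by (rule cInf_greatest[OF Atne below])
    have Sle: "S t \<le> S0 + M * T t"
    proof (rule ccontr)
      assume "\<not> ?thesis"
      then have lt: "S0 + M * T t < S t" by simp
      define \<rho> where "\<rho> = (S t + S0 + M * T t) / 2"
      have "\<rho> \<in> At" using above lt unfolding \<rho>_def by simp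
      then have "S t \<le> \<rho>" unfolding St by (rule cInf_lower[OF _ Atbdd])
      then show False using lt unfolding \<rho>_def by simp
    qed
    have Tm: "(\<alpha> * t) powr (- 1 / \<alpha>) = 1 / T t" unfolding T_def by (rule negpow)
    have Tt: "(\<alpha> * t) powr (1 / \<alpha>) = T t" unfolding T_def by simp
    have "0 \<le> S t / (M * T t) - 1" using Sge MT by (simp add: field_simps)
    moreover have "S t / (M * T t) - 1 \<le> S0 / M * (1 / T t)"
    proof -
      have "S t / (M * T t) - 1 = (S t - M * T t) / (M * T t)" using M_pos TT by (simp add: diff_divide_distrib)
      also have "\<dots> \<le> S0 / (M * T t)" using Sle MT by (intro divide_right_mono) auto
      also have "\<dots> = S0 / M * (1 / T t)" by simp
      finally show ?thesis .
    qed
    ultimately show "0 \<le> S t / (M * (\<alpha> * t) powr (1 / \<alpha>)) - 1 \<and>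
                S t / (M * (\<alpha> * t) powr (1 / \<alpha>)) - 1 \<le> S 0 / M * (\<alpha> * t) powr (- 1 / \<alpha>)"
      unfolding Tm S0_def[symmetric] Tt by simp
  qed
  have part2: "\<forall>\<epsilon>>0. \<forall>\<eta>>0. \<forall>\<^sub>F t in at_top. \<forall>y\<ge>\<epsilon>.
            \<bar>m t (M * (\<alpha> * t) powr (1 / \<alpha>) * y) / (M * G_profile y) - 1\<bar> \<le> \<eta>"
  proof (intro allI impI)
    fix e0 \<eta> :: real assume e0: "e0 > 0" and eta: "\<eta> > 0"
    define \<eta>1 where "\<eta>1 = min \<eta> 1"
    have h1: "0 < \<eta>1" "\<eta>1 \<le> 1" "\<eta>1 \<le> \<eta>" using eta by (auto simp: \<eta>1_def)
    define \<delta> where "\<delta> = \<eta>1 / 2"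
    have dl: "0 < \<delta>" "\<delta> < 1" using h1 by (auto simp: \<delta>_def)
    define c where "c = min e0 1 * \<eta>1 / 2"
    have c: "c > 0" using e0 h1 by (simp add: c_def)
    define X where "X = S0 / (M * c) + 1"
    have X0: "S0 / (M * c) \<ge> 0" using S0nn M_pos c by simp
    have X: "X > S0 / (M * c)" "X > 0" using X0 by (auto simp: X_def)
    define t1 where "t1 = max (2 / \<eta>1) (X powr \<alpha> / \<alpha>) + 1"
    show "\<forall>\<^sub>F t in at_top. \<forall>y\<ge>e0.
            \<bar>m t (M * (\<alpha> * t) powr (1 / \<alpha>) * y) / (M * G_profile y) - 1\<bar> \<le> \<eta>"
      using eventually_ge_at_top[of t1]
    proof eventually_elim
      fix t assume tt1: "t1 \<le> t"
      have t2: "t + 1 \<ge> 2 / \<eta>1" "\<alpha> * (t + 1) \<ge> X powr \<alpha>"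
      proof -
        show "t + 1 \<ge> 2 / \<eta>1" using tt1 unfolding t1_def by simp
        have "t + 1 \<ge> X powr \<alpha> / \<alpha>" using tt1 unfolding t1_def by simp
        then show "\<alpha> * (t + 1) \<ge> X powr \<alpha>" using a0 by (simp add: field_simps)
      qed
      have t: "t > 0"
      proof -
        have "2 / \<eta>1 > 0" using h1 by simp
        moreover have "2 / \<eta>1 \<le> max (2 / \<eta>1) (X powr \<alpha> / \<alpha>)" by simp
        ultimately show ?thesis using tt1 unfolding t1_def by linarith
      qed
      have TT: "T t > 0" "T (t+1) > 0" using Tpos t by auto
      define k where "k = T t / T (t + 1)"
      have kge: "k \<ge> 1 - \<eta>1 / 2"
      proof -
        have "k = (t / (t + 1)) powr (1/\<alpha>)"
          unfolding k_def T_def using a0 t by (simp add: powr_divide[symmetric])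
        moreover have "(t / (t + 1)) powr 1 \<le> (t / (t + 1)) powr (1/\<alpha>)"
          using alpha t by (intro powr_mono') (auto simp: field_simps)
        moreover have "t / (t + 1) = 1 - 1 / (t + 1)" using t by (simp add: field_simps)
        moreover have "1 / (t + 1) \<le> \<eta>1 / 2"
          using t2(1) h1 t by (simp add: field_simps)
        ultimately show ?thesis using t by simp
      qed
      have kpos: "k > 0" unfolding k_def using TT by simp
      define s where "s = S0 / (M * T (t + 1))"
      have sle: "s \<le> c"
      proof -
        have "(X powr \<alpha>) powr (1/\<alpha>) \<le> (\<alpha> * (t + 1)) powr (1/\<alpha>)"
          using t2(2) a0 by (intro powr_mono2) auto
        then have "X \<le> T (t + 1)" unfolding T_def using X a0 by (simp add: powr_powr)
        then have "S0 / (M * c) \<le> T (t + 1)" using X by simp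
        then have "S0 \<le> c * (M * T (t + 1))" using M_pos c by (simp add: field_simps)
        then show ?thesis unfolding s_def using M_pos TT by (simp add: field_simps)
      qed
      show "\<forall>y\<ge>e0. \<bar>m t (M * (\<alpha> * t) powr (1 / \<alpha>) * y) / (M * G_profile y) - 1\<bar> \<le> \<eta>"
      proof (intro allI impI)
        fix y assume y: "y \<ge> e0"
        have ypos: "y > 0" using y e0 by simp
        define \<rho> where "\<rho> = M * T t * y"
        have r0: "\<rho> \<ge> 0" unfolding \<rho>_def using M_pos TT ypos by simp
        have Gpos: "G_profile y > 0" using ypos by (simp add: G_profile_def)
        have up: "m t \<rho> \<le> M * G_profile y"
        proof -
          have "\<rho> / T t = M * y" unfolding \<rho>_def using TT by simp
          then show ?thesis using upper2[OF t r0] by (auto simp: G_profile_def)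
        qed
        define Y where "Y = (\<rho> - S0) * Lf \<alpha> 1 t / M"
        have Yeq: "Y = y * k - s"
        proof -
          have Tt1: "(\<alpha> * (t + 1)) powr (1/\<alpha>) = T (t+1)" by (simp add: T_def)
          show ?thesis unfolding Y_def Lf_eq Tt1 k_def s_def \<rho>_def using M_pos TT by (simp add: field_simps)
        qed
        have "m t \<rho> \<ge> max 0 (M * gd \<delta> Y)" using lower[OF _ dl _ r0] t unfolding Y_def by simp
        then have "m t \<rho> \<ge> M * min Y (1 - \<delta>)"
          using gd_ge_min[OF dl, of Y] M_pos by (smt (verit) mult_left_mono)
        moreover have "min Y (1 - \<delta>) \<ge> (1 - \<eta>1) * G_profile y"
        proof (cases "y \<le> 1")
          case True
          have "s \<le> y * (\<eta>1 / 2)"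
          proof -
            have "c \<le> e0 * (\<eta>1 / 2)" unfolding c_def using h1 e0 by (simp add: mult_right_mono)
            also have "\<dots> \<le> y * (\<eta>1 / 2)" using y h1 by (intro mult_right_mono) auto
            finally show ?thesis using sle by simp
          qed
          moreover have "y * k \<ge> y * (1 - \<eta>1 / 2)" using kge ypos by (intro mult_left_mono) auto
          ultimately have "Y \<ge> (1 - \<eta>1) * y" unfolding Yeq by (simp add: algebra_simps)
          moreover have "1 - \<delta> \<ge> (1 - \<eta>1) * y"
          proof -
            have "(1 - \<eta>1) * y \<le> (1 - \<eta>1) * 1" using True h1 by (intro mult_left_mono) auto
            then show ?thesis unfolding \<delta>_def using h1 by simp
          qed
          ultimately show ?thesis using True by (simp add: G_profile_def)
        next
          case False
          have "c \<le> \<eta>1 / 2" unfolding c_def using h1 by (simp add: mult_right_mono min_le_iff_disj)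
          have "y * k \<ge> 1 * k" using False kpos by (intro mult_right_mono) auto
          then have "Y \<ge> 1 - \<eta>1" unfolding Yeq using kge sle \<open>c \<le> \<eta>1 / 2\<close> by simp
          moreover have "1 - \<delta> \<ge> 1 - \<eta>1" unfolding \<delta>_def using h1 by simp
          ultimately show ?thesis using False by (simp add: G_profile_def)
        qed
        ultimately have low: "m t \<rho> \<ge> (1 - \<eta>1) * (M * G_profile y)"
          using M_pos by (smt (verit) mult_left_mono mult.left_commute)
        have MG: "M * G_profile y > 0" using M_pos Gpos by simp
        have "m t \<rho> / (M * G_profile y) \<le> 1" using up MG by simp
        moreover have "m t \<rho> / (M * G_profile y) \<ge> 1 - \<eta>1"
        proof -
          have "(1 - \<eta>1) * (M * G_profile y) / (M * G_profile y) \<le> m t \<rho> / (M * G_profile y)"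
            using low MG by (intro divide_right_mono) auto
          moreover have "(1 - \<eta>1) * (M * G_profile y) / (M * G_profile y) = 1 - \<eta>1"
            using MG by (metis less_irrefl nonzero_mult_div_cancel_right)
          ultimately show ?thesis by simp
        qed
        ultimately have "\<bar>m t \<rho> / (M * G_profile y) - 1\<bar> \<le> \<eta>" using h1 by linarith
        moreover have "M * (\<alpha> * t) powr (1 / \<alpha>) * y = \<rho>" unfolding \<rho>_def T_def by simp
        ultimately show "\<bar>m t (M * (\<alpha> * t) powr (1 / \<alpha>) * y) / (M * G_profile y) - 1\<bar> \<le> \<eta>" by simp
      qed
    qed
  qed
  show ?thesis using part1 part2 by blast
qed

end
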